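(* Let $G$ be a $\lambda$-graph and $Q$ a query over $G$. Then $Q^{\Downarrow}$ is an open bisimulation if and only if $[n]=[m]$ for all nodes $n,m$ with $n\,Q\,m$.
   Context: A pre-$\lambda$-graph is a directed graph whose nodes are of four kinds: an application node $@(n_1,n_2)$ has exactly two children, its left child $n_1$ and its right child $n_2$; an abstraction node $\lambda(n)$ has exactly one child, its body $n$; a free variable node has no children and carries an atom $\mathrm{id}(n)$ from a fixed set of atoms, distinct free variable nodes carrying distinct atoms; a bound variable node $\mathrm{var}(l)$ has exactly one outgoing binding edge, to an abstraction node $l$ (its binder). Letters $l,l'$ denote abstraction nodes. A trace is a finite sequence of directions from $\{\swarrow,\downarrow,\searrow\}$; $\epsilon$ is the empty trace and $d\cdot\tau$ is the trace $\tau$ extended by one final step $d$. Paths $n\xrightarrow{\tau}m$ are defined inductively: $n\xrightarrow{\epsilon}n$; if $n\xrightarrow{\tau}\lambda(m)$ then $n\xrightarrow{\downarrow\cdot\tau}m$; if $n\xrightarrow{\tau}@(m_1,m_2)$ then $n\xrightarrow{\swarrow\cdot\tau}m_1$ and $n\xrightarrow{\searrow\cdot\tau}m_2$ (binding edges are never followed). We write $n\xrightarrow{\tau}$ if $n\xrightarrow{\tau}m$ for some $m$. The path $n\xrightarrow{\tau}$ crosses a node $m$ if either $n\xrightarrow{\tau}m$, or $\tau=d\cdot\tau'$ and $n\xrightarrow{\tau'}$ crosses $m$. A root is a node $r$ such that the only path ending in $r$ has the empty trace. A node $m$ dominates $n$ if every path from a root to $n$ crosses $m$. A $\lambda$-graph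 is a pre-$\lambda$-graph that has finitely many nodes, is acyclic ($n\xrightarrow{\tau}n$ holds only for $\tau=\epsilon$), and is dominated (every bound variable node $\mathrm{var}(l)$ is dominated by its binder $l$). Two nodes are homogeneous if both are application nodes, or both abstraction nodes, or both free variable nodes, or both bound variable nodes; a binary relation $R$ on nodes is homogeneous if it only relates homogeneous nodes. Rules: $(\swarrow)$: $@(n_1,n_2)\,R\,@(m_1,m_2)$ implies $n_1\,R\,m_1$; $(\searrow)$: $@(n_1,n_2)\,R\,@(m_1,m_2)$ implies $n_2\,R\,m_2$; $(\downarrow)$: $\lambda(n)\,R\,\lambda(m)$ implies $n\,R\,m$; $(\circlearrowright)$: $\mathrm{var}(n)\,R\,\mathrm{var}(m)$ implies $n\,R\,m$. $R$ is propagated if closed under $(\swarrow),(\downarrow),(\searrow)$. $R$ is open if $n\,R\,m$ implies $n=m$ for all free variable nodes $n,m$. A bisimulation is a homogeneous propagated relation closed also under $(\circlearrowright)$. $R^{\Downarrow}$ (propagation) is the smallest propagated relation containing $R$. A query over $G$ is a binary relation on the roots of $G$. Readback. Locally nameless terms: $t::=\underline{k}\mid \mathsf{x}\mid t\,s\mid \lambda.t$ with $k\in\mathbb N$ (bound variable as de Bruijn index) and $\mathsf{x}$ an atom (free variable); equality is syntactic. For a path $n\xrightarrow{\tau}$ crossing an abstraction node $l$, the index $\mathrm{idx}(l,n\xrightarrow{\tau})$ is defined by induction on the crossing: it is $0$ if $n\xrightarrow{\tau}l$; for $n\xrightarrow{d\cdot\tau}l'$ with $l'$ an abstraction node different from $l$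 it is $\mathrm{idx}(l,n\xrightarrow{\tau})+1$; for $n\xrightarrow{d\cdot\tau}m$ with $m$ not an abstraction node it is $\mathrm{idx}(l,n\xrightarrow{\tau})$. For a root $r$ and a path $r\xrightarrow{\tau}n$, the readback $[r\xrightarrow{\tau}n]$ is: $\underline{\mathrm{idx}(l,r\xrightarrow{\tau})}$ if $n=\mathrm{var}(l)$ (well defined by domination); $\mathrm{id}(n)$ if $n$ is a free variable node; $\lambda.[r\xrightarrow{\downarrow\cdot\tau}m]$ if $n=\lambda(m)$; $[r\xrightarrow{\swarrow\cdot\tau}n_1]\,[r\xrightarrow{\searrow\cdot\tau}n_2]$ if $n=@(n_1,n_2)$. For a root $r$, $[r]:=[r\xrightarrow{\epsilon}r]$. *)

theory Defs
  imports Main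
begin

datatype ('n, 'a) kind =
    App 'n 'n
  | Abs 'n
  | FVar 'a
  | BVar 'n        (* bound variable node var(l), binding edge to l *)

datatype dir = DL | DD | DR   (* south-west, down, south-east *)

text \<open>Traces: the list head is the LAST step, i.e. d # tau is the trace tau
  extended by the final step d.\<close>
type_synonym trace = "dir list"

definition is_abs :: "('n,'a) kind \<Rightarrow> bool" where
  "is_abs k = (\<exists>m. k = Abs m)"

definition pre_lambda_graph :: "'n set \<Rightarrow> ('n \<Rightarrow> ('n,'a) kind) \<Rightarrow> bool" where
  "pre_lambda_graph N lab \<longleftrightarrow>
     (\<forall>n\<in>N. \<forall>n1 n2. lab n = App n1 n2 \<longrightarrow> n1 \<in> N \<and> n2 \<in> N) \<and>
     (\<forall>n\<in>N. \<forall>m. lab n = Abs m \<longrightarrow> m \<in> N) \<and>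
     (\<forall>n\<in>N. \<forall>l. lab n = BVar l \<longrightarrow> l \<in> N \<and> is_abs (lab l)) \<and>
     (\<forall>n\<in>N. \<forall>m\<in>N. \<forall>a. lab n = FVar a \<and> lab m = FVar a \<longrightarrow> n = m)"

inductive path :: "('n \<Rightarrow> ('n,'a) kind) \<Rightarrow> 'n \<Rightarrow> trace \<Rightarrow> 'n \<Rightarrow> bool"
  for lab where
  path_eps: "path lab n [] n"
| path_abs: "path lab n \<tau> m \<Longrightarrow> lab m = Abs m' \<Longrightarrow> path lab n (DD # \<tau>) m'"
| path_appL: "path lab n \<tau> m \<Longrightarrow> lab m = App m1 m2 \<Longrightarrow> path lab n (DL # \<tau>) m1"
| path_appR: "path lab n \<tau> m \<Longrightarrow> lab m = App m1 m2 \<Longrightarrow> path lab n (DR # \<tau>) m2"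

fun crosses :: "('n \<Rightarrow> ('n,'a) kind) \<Rightarrow> 'n \<Rightarrow> trace \<Rightarrow> 'n \<Rightarrow> bool" where
  "crosses lab n [] m = path lab n [] m"
| "crosses lab n (d # \<tau>) m = (path lab n (d # \<tau>) m \<or> crosses lab n \<tau> m)"

definition is_root :: "'n set \<Rightarrow> ('n \<Rightarrow> ('n,'a) kind) \<Rightarrow> 'n \<Rightarrow> bool" where
  "is_root N lab r \<longleftrightarrow> r \<in> N \<and> (\<forall>n\<in>N. \<forall>\<tau>. path lab n \<tau> r \<longrightarrow> \<tau> = [])"

definition dominates :: "'n set \<Rightarrow> ('n \<Rightarrow> ('n,'a) kind) \<Rightarrow> 'n \<Rightarrow> 'n \<Rightarrow> bool" where
  "dominates N lab m n \<longleftrightarrow>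
     (\<forall>r \<tau>. is_root N lab r \<and> path lab r \<tau> n \<longrightarrow> crosses lab r \<tau> m)"

definition lambda_graph :: "'n set \<Rightarrow> ('n \<Rightarrow> ('n,'a) kind) \<Rightarrow> bool" where
  "lambda_graph N lab \<longleftrightarrow>
     pre_lambda_graph N lab \<and> finite N \<and>
     (\<forall>n\<in>N. \<forall>\<tau>. path lab n \<tau> n \<longrightarrow> \<tau> = []) \<and>
     (\<forall>n\<in>N. \<forall>l. lab n = BVar l \<longrightarrow> dominates N lab l n)"

fun homog_kind :: "('n,'a) kind \<Rightarrow> ('n,'a) kind \<Rightarrow> bool" where
  "homog_kind (App _ _) (App _ _) = True"
| "homog_kind (Abs _) (Abs _) = True"
| "homog_kind (FVar _) (FVar _) = True"
| "homog_kind (BVar _) (BVar _) = True"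
| "homog_kind _ _ = False"

definition homogeneous :: "('n \<Rightarrow> ('n,'a) kind) \<Rightarrow> ('n \<times> 'n) set \<Rightarrow> bool" where
  "homogeneous lab R \<longleftrightarrow> (\<forall>(n, m) \<in> R. homog_kind (lab n) (lab m))"

definition propagated :: "('n \<Rightarrow> ('n,'a) kind) \<Rightarrow> ('n \<times> 'n) set \<Rightarrow> bool" where
  "propagated lab R \<longleftrightarrow>
     (\<forall>n m n1 n2 m1 m2. (n, m) \<in> R \<and> lab n = App n1 n2 \<and> lab m = App m1 m2
        \<longrightarrow> (n1, m1) \<in> R \<and> (n2, m2) \<in> R) \<and>
     (\<forall>n m n' m'. (n, m) \<in> R \<and> lab n = Abs n' \<and> lab m = Abs m' \<longrightarrow> (n', m') \<in> R)"

definition open_rel :: "('n \<Rightarrow> ('n,'a) kind) \<Rightarrow> ('n \<times> 'n) set \<Rightarrow> bool" where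
  "open_rel lab R \<longleftrightarrow>
     (\<forall>n m a b. (n, m) \<in> R \<and> lab n = FVar a \<and> lab m = FVar b \<longrightarrow> n = m)"

definition bisimulation :: "('n \<Rightarrow> ('n,'a) kind) \<Rightarrow> ('n \<times> 'n) set \<Rightarrow> bool" where
  "bisimulation lab R \<longleftrightarrow> homogeneous lab R \<and> propagated lab R \<and>
     (\<forall>n m l l'. (n, m) \<in> R \<and> lab n = BVar l \<and> lab m = BVar l' \<longrightarrow> (l, l') \<in> R)"

text \<open>Propagation R^Downarrow: the smallest propagated relation containing R.\<close>
inductive_set propagation :: "('n \<Rightarrow> ('n,'a) kind) \<Rightarrow> ('n \<times> 'n) set \<Rightarrow> ('n \<times> 'n) set"
  for lab R where
  prop_base: "(n, m) \<in> R \<Longrightarrow> (n, m) \<in> propagation lab R"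
| prop_L: "(n, m) \<in> propagation lab R \<Longrightarrow> lab n = App n1 n2 \<Longrightarrow> lab m = App m1 m2
            \<Longrightarrow> (n1, m1) \<in> propagation lab R"
| prop_R: "(n, m) \<in> propagation lab R \<Longrightarrow> lab n = App n1 n2 \<Longrightarrow> lab m = App m1 m2
            \<Longrightarrow> (n2, m2) \<in> propagation lab R"
| prop_D: "(n, m) \<in> propagation lab R \<Longrightarrow> lab n = Abs n' \<Longrightarrow> lab m = Abs m'
            \<Longrightarrow> (n', m') \<in> propagation lab R"

definition is_query :: "'n set \<Rightarrow> ('n \<Rightarrow> ('n,'a) kind) \<Rightarrow> ('n \<times> 'n) set \<Rightarrow> bool" where
  "is_query N lab Q \<longleftrightarrow> (\<forall>(n, m) \<in> Q. is_root N lab n \<and> is_root N lab m)"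

datatype 'a lnterm = BV nat | FV 'a | Ap "'a lnterm" "'a lnterm" | Lam "'a lnterm"

text \<open>idx l (n --tau-->), meaningful when the path crosses the abstraction l.\<close>
fun idx :: "('n \<Rightarrow> ('n,'a) kind) \<Rightarrow> 'n \<Rightarrow> 'n \<Rightarrow> trace \<Rightarrow> nat" where
  "idx lab l n [] = 0"
| "idx lab l n (d # \<tau>) =
     (if path lab n (d # \<tau>) l then 0
      else if (\<exists>l'. path lab n (d # \<tau>) l' \<and> is_abs (lab l')) then Suc (idx lab l n \<tau>)
      else idx lab l n \<tau>)"

text \<open>rb lab r tau t: the readback [r --tau--> n] (n the target of the path) is t.\<close>
inductive rb :: "('n \<Rightarrow> ('n,'a) kind) \<Rightarrow> 'n \<Rightarrow> trace \<Rightarrow> 'a lnterm \<Rightarrow> bool"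
  for lab where
  rb_bvar: "path lab r \<tau> n \<Longrightarrow> lab n = BVar l \<Longrightarrow> rb lab r \<tau> (BV (idx lab l r \<tau>))"
| rb_fvar: "path lab r \<tau> n \<Longrightarrow> lab n = FVar a \<Longrightarrow> rb lab r \<tau> (FV a)"
| rb_abs: "path lab r \<tau> n \<Longrightarrow> lab n = Abs m \<Longrightarrow> rb lab r (DD # \<tau>) t
            \<Longrightarrow> rb lab r \<tau> (Lam t)"
| rb_app: "path lab r \<tau> n \<Longrightarrow> lab n = App n1 n2 \<Longrightarrow> rb lab r (DL # \<tau>) t1
            \<Longrightarrow> rb lab r (DR # \<tau>) t2 \<Longrightarrow> rb lab r \<tau> (Ap t1 t2)"

definition readback :: "('n \<Rightarrow> ('n,'a) kind) \<Rightarrow> 'n \<Rightarrow> 'a lnterm" where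
  "readback lab r = (THE t. rb lab r [] t)"

end

theory Submission
  imports Defs
begin

lemma path_Nil[simp]: "path lab n [] m \<longleftrightarrow> m = n"
  by (auto elim: path.cases intro: path.intros)

lemma path_DD: "path lab n (DD#\<tau>) m \<longleftrightarrow> (\<exists>k. path lab n \<tau> k \<and> lab k = Abs m)"
  by (auto elim: path.cases intro: path.intros)
lemma path_DL: "path lab n (DL#\<tau>) m \<longleftrightarrow> (\<exists>k m2. path lab n \<tau> k \<and> lab k = App m m2)"
  by (rule iffI, erule path.cases, auto intro: path.intros)
lemma path_DR: "path lab n (DR#\<tau>) m \<longleftrightarrow> (\<exists>k m1. path lab n \<tau> k \<and> lab k = App m1 m)"
  by (rule iffI, erule path.cases, auto intro: path.intros)

lemma path_det: "path lab n \<tau> m \<Longrightarrow> path lab n \<tau> m' \<Longrightarrow> m = m'"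
proof (induction \<tau> arbitrary: m m')
  case Nil then show ?case by simp
next
  case (Cons d \<tau>) show ?case
  proof (cases d)
    case DL then show ?thesis using Cons by (auto simp: path_DL) (metis kind.inject(1))
  next
    case DD then show ?thesis using Cons by (auto simp: path_DD) (metis kind.inject(2))
  next
    case DR then show ?thesis using Cons by (auto simp: path_DR) (metis kind.inject(1))
  qed
qed

lemma path_comp: "path lab x \<sigma> m \<Longrightarrow> path lab n \<rho> x \<Longrightarrow> path lab n (\<sigma>@\<rho>) m"
  by (induction rule: path.induct) (auto intro: path.intros)

lemma path_decomp: "path lab n (\<sigma>@\<rho>) m \<Longrightarrow> \<exists>x. path lab n \<rho> x \<and> path lab x \<sigma> m"
proof (induction \<sigma> arbitrary: m)
  case Nil then show ?case by simp
next
  case (Cons d \<sigma>)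
  show ?case
  proof (cases d)
    case DD
    then obtain k where k: "path lab n (\<sigma>@\<rho>) k" "lab k = Abs m" using Cons.prems by (auto simp: path_DD)
    then obtain x where x: "path lab n \<rho> x" "path lab x \<sigma> k" using Cons.IH by blast
    have "path lab x (DD#\<sigma>) m" by (rule path.path_abs[OF x(2) k(2)])
    then show ?thesis using x DD by auto
  next
    case DL
    then obtain k m2 where k: "path lab n (\<sigma>@\<rho>) k" "lab k = App m m2" using Cons.prems by (auto simp: path_DL)
    then obtain x where x: "path lab n \<rho> x" "path lab x \<sigma> k" using Cons.IH by blast
    have "path lab x (DL#\<sigma>) m" by (rule path.path_appL[OF x(2) k(2)])
    then show ?thesis using x DL by auto
  next
    case DR
    then obtain k m1 where k: "path lab n (\<sigma>@\<rho>) k" "lab k = App m1 m" using Cons.prems by (auto simp: path_DR)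
    then obtain x where x: "path lab n \<rho> x" "path lab x \<sigma> k" using Cons.IH by blast
    have "path lab x (DR#\<sigma>) m" by (rule path.path_appR[OF x(2) k(2)])
    then show ?thesis using x DR by auto
  qed
qed

lemma path_in_aux: "path lab n \<tau> m \<Longrightarrow> pre_lambda_graph N lab \<Longrightarrow> n \<in> N \<Longrightarrow> m \<in> N"
proof (induction rule: path.induct)
  case (path_eps n) then show ?case by simp
next
  case (path_abs n \<tau> m m') then show ?case unfolding pre_lambda_graph_def by blast
next
  case (path_appL n \<tau> m m1 m2) then show ?case unfolding pre_lambda_graph_def by blast
next
  case (path_appR n \<tau> m m1 m2) then show ?case unfolding pre_lambda_graph_def by blast
qed

lemma path_in: assumes "pre_lambda_graph N lab" "n \<in> N" shows "path lab n \<tau> m \<Longrightarrow> m \<in> N"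
  by (erule path_in_aux[OF _ assms])

lemma path_bound:
  assumes G: "lambda_graph N lab" and n: "n \<in> N" and p: "path lab n \<tau> m"
  shows "length \<tau> < card N"
proof -
  have pre: "pre_lambda_graph N lab" and fin: "finite N"
    and acyc: "\<forall>n\<in>N. \<forall>\<tau>. path lab n \<tau> n \<longrightarrow> \<tau> = []"
    using G by (auto simp: lambda_graph_def)
  have ex: "\<forall>i. \<exists>x. i \<le> length \<tau> \<longrightarrow> path lab n (drop i \<tau>) x"
  proof
    fix i show "\<exists>x. i \<le> length \<tau> \<longrightarrow> path lab n (drop i \<tau>) x"
      using path_decomp[of lab n "take i \<tau>" "drop i \<tau>" m] p by auto
  qed
  then obtain f where f: "\<And>i. i \<le> length \<tau> \<Longrightarrow> path lab n (drop i \<tau>) (f i)" by metis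
  have inj: "inj_on f {0..length \<tau>}"
  proof (rule inj_onI)
    fix i j assume i: "i \<in> {0..length \<tau>}" and j: "j \<in> {0..length \<tau>}" and e: "f i = f j"
    show "i = j"
    proof (rule ccontr)
      assume "i \<noteq> j"
      then consider "i < j" | "j < i" by linarith
      then show False
      proof cases
        case 1
        have dd: "drop (j - i) (drop i \<tau>) = drop j \<tau>" using 1 by (simp add: drop_drop)
        have d: "drop i \<tau> = take (j - i) (drop i \<tau>) @ drop j \<tau>"
          by (simp only: dd[symmetric] append_take_drop_id)
        have pp: "path lab n (take (j - i) (drop i \<tau>) @ drop j \<tau>) (f i)" using f i d by auto
        obtain x where x1: "path lab n (drop j \<tau>) x" and x2: "path lab x (take (j - i) (drop i \<tau>)) (f i)"
          using path_decomp[OF pp] by blast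
        have xf: "x = f j" using f j x1 path_det by fastforce
        have fN: "f j \<in> N" using path_in[OF pre n f] j by auto
        have "path lab (f j) (take (j - i) (drop i \<tau>)) (f j)" using x2 xf e by simp
        then have "take (j - i) (drop i \<tau>) = []" using acyc fN by blast
        then show False using 1 j by auto
      next
        case 2
        have dd: "drop (i - j) (drop j \<tau>) = drop i \<tau>" using 2 by (simp add: drop_drop)
        have d: "drop j \<tau> = take (i - j) (drop j \<tau>) @ drop i \<tau>"
          by (simp only: dd[symmetric] append_take_drop_id)
        have pp: "path lab n (take (i - j) (drop j \<tau>) @ drop i \<tau>) (f j)" using f j d by auto
        obtain x where x1: "path lab n (drop i \<tau>) x" and x2: "path lab x (take (i - j) (drop j \<tau>)) (f j)"
          using path_decomp[OF pp] by blast
        have xf: "x = f i" using f i x1 path_det by fastforce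
        have fN: "f i \<in> N" using path_in[OF pre n f] i by auto
        have "path lab (f i) (take (i - j) (drop j \<tau>)) (f i)" using x2 xf e by simp
        then have "take (i - j) (drop j \<tau>) = []" using acyc fN by blast
        then show False using 2 i by auto
      qed
    qed
  qed
  have sub: "f ` {0..length \<tau>} \<subseteq> N" using path_in[OF pre n f] by auto
  have "card (f ` {0..length \<tau>}) \<le> card N" using card_mono[OF fin sub] .
  then show ?thesis using card_image[OF inj] by simp
qed


lemma homog_sym: "homog_kind a b \<Longrightarrow> homog_kind b a"
  by (cases a; cases b) auto

lemma homog_conv: assumes "homogeneous lab R" shows "homogeneous lab (R\<inverse>)"
  unfolding homogeneous_def
proof (rule ballI)
  fix p assume "p \<in> R\<inverse>"
  then obtain a b where p: "p = (a, b)" "(b, a) \<in> R" by (cases p) auto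
  then have "homog_kind (lab b) (lab a)" using assms unfolding homogeneous_def by blast
  then have "homog_kind (lab a) (lab b)" by (rule homog_sym)
  then show "case p of (n, m) \<Rightarrow> homog_kind (lab n) (lab m)" using p(1) by simp
qed

lemma prop_conv: "propagated lab R \<Longrightarrow> propagated lab (R\<inverse>)"
  unfolding propagated_def converse_iff by blast

lemma bisim_conv: "bisimulation lab R \<Longrightarrow> bisimulation lab (R\<inverse>)"
  by (auto simp: bisimulation_def homog_conv prop_conv)

lemma open_conv: "open_rel lab R \<Longrightarrow> open_rel lab (R\<inverse>)"
  unfolding open_rel_def converse_iff by blast

lemma shape:
  assumes H: "homogeneous lab R" and P: "propagated lab R"
  shows "path lab p \<tau> p' \<Longrightarrow> (p, q) \<in> R \<Longrightarrow> \<exists>q'. path lab q \<tau> q' \<and> (p', q') \<in> R"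
proof (induction arbitrary: q rule: path.induct)
  case (path_eps n) then show ?case by simp
next
  case (path_abs n \<tau> m m')
  obtain q0 where q0: "path lab q \<tau> q0" "(m, q0) \<in> R" using path_abs.IH path_abs.prems by blast
  have "homog_kind (lab m) (lab q0)" using H q0(2) by (auto simp: homogeneous_def)
  then obtain q1 where q1: "lab q0 = Abs q1" using path_abs.hyps(2) by (cases "lab q0") auto
  have "(m', q1) \<in> R" using P q0(2) path_abs.hyps(2) q1 unfolding propagated_def by blast
  moreover have "path lab q (DD#\<tau>) q1" by (rule path.path_abs[OF q0(1) q1])
  ultimately show ?case by blast
next
  case (path_appL n \<tau> m m1 m2)
  obtain q0 where q0: "path lab q \<tau> q0" "(m, q0) \<in> R" using path_appL.IH path_appL.prems by blast
  have "homog_kind (lab m) (lab q0)" using H q0(2) by (auto simp: homogeneous_def)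
  then obtain q1 q2 where q1: "lab q0 = App q1 q2" using path_appL.hyps(2) by (cases "lab q0") auto
  have "(m1, q1) \<in> R" using P q0(2) path_appL.hyps(2) q1 unfolding propagated_def by blast
  moreover have "path lab q (DL#\<tau>) q1" by (rule path.path_appL[OF q0(1) q1])
  ultimately show ?case by blast
next
  case (path_appR n \<tau> m m1 m2)
  obtain q0 where q0: "path lab q \<tau> q0" "(m, q0) \<in> R" using path_appR.IH path_appR.prems by blast
  have "homog_kind (lab m) (lab q0)" using H q0(2) by (auto simp: homogeneous_def)
  then obtain q1 q2 where q1: "lab q0 = App q1 q2" using path_appR.hyps(2) by (cases "lab q0") auto
  have "(m2, q2) \<in> R" using P q0(2) path_appR.hyps(2) q1 unfolding propagated_def by blast
  moreover have "path lab q (DR#\<tau>) q2" by (rule path.path_appR[OF q0(1) q1])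
  ultimately show ?case by blast
qed

lemma shape_back:
  assumes H: "homogeneous lab R" and P: "propagated lab R"
  shows "path lab q \<tau> q' \<Longrightarrow> (p, q) \<in> R \<Longrightarrow> \<exists>p'. path lab p \<tau> p' \<and> (p', q') \<in> R"
  using shape[OF homog_conv[OF H] prop_conv[OF P], of q \<tau> q' p] by auto

lemma core:
  assumes G: "lambda_graph N lab" and H: "homogeneous lab R" and P: "propagated lab R"
    and zx: "(z, x) \<in> R" and zy: "(z, y) \<in> R" and xy: "path lab x \<sigma> y" and ne: "\<sigma> \<noteq> []"
    and yN: "y \<in> N"
  shows False
proof -
  define E where "E = {(x, y). \<exists>z. (z, x) \<in> R \<and> (z, y) \<in> R}"
  have Esh: "\<exists>b'. path lab b \<tau> b' \<and> (a', b') \<in> E" if ab: "(a, b) \<in> E" and ap: "path lab a \<tau> a'" for a b a' \<tau>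
  proof -
    obtain c where c: "(c, a) \<in> R" "(c, b) \<in> R" using ab E_def by auto
    obtain c' where c': "path lab c \<tau> c'" "(c', a') \<in> R" using shape_back[OF H P ap c(1)] by blast
    obtain b' where "path lab b \<tau> b'" "(c', b') \<in> R" using shape[OF H P c'(1) c(2)] by blast
    then show ?thesis using c' E_def by auto
  qed
  define J where "J v w \<longleftrightarrow> (v, w) \<in> E \<and> path lab v \<sigma> w" for v w
  have Jstep: "\<exists>w'. J w w'" if jv: "J v w" for v w
    using Esh[of v w \<sigma> w] jv J_def by blast
  have J0: "J x y" using zx zy xy J_def E_def by auto
  have it: "\<exists>w w'. path lab y (concat (replicate k \<sigma>)) w \<and> J w w'" for k
  proof (induction k)
    case 0 then show ?case using Jstep[OF J0] by auto
  next
    case (Suc k)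
    then obtain w w' where "path lab y (concat (replicate k \<sigma>)) w" "J w w'" by blast
    moreover obtain w'' where "J w' w''" using Jstep calculation(2) by blast
    ultimately show ?case using path_comp J_def by fastforce
  qed
  obtain w where "path lab y (concat (replicate (card N) \<sigma>)) w" using it by blast
  then have "length (concat (replicate (card N) \<sigma>)) < card N" using path_bound[OF G yN] by blast
  moreover have "length (concat (replicate (card N) \<sigma>)) = card N * length \<sigma>"
    by (simp add: length_concat sum_list_replicate)
  moreover have "length \<sigma> \<ge> 1" using ne by (cases \<sigma>) auto
  ultimately show False by (metis mult_le_mono2 mult.right_neutral not_le)
qed

lemma crosses_iff: "crosses lab n \<tau> m \<longleftrightarrow> (\<exists>\<sigma> \<rho>. \<tau> = \<sigma> @ \<rho> \<and> path lab n \<rho> m)"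
proof (induction \<tau>)
  case Nil then show ?case by simp
next
  case (Cons d \<tau>)
  show ?case
  proof
    assume "crosses lab n (d # \<tau>) m"
    then have "path lab n (d # \<tau>) m \<or> crosses lab n \<tau> m" by simp
    then show "\<exists>\<sigma> \<rho>. d # \<tau> = \<sigma> @ \<rho> \<and> path lab n \<rho> m"
    proof
      assume "path lab n (d # \<tau>) m"
      then show ?thesis by (intro exI[of _ "[]"] exI[of _ "d # \<tau>"]) simp
    next
      assume "crosses lab n \<tau> m"
      then obtain \<sigma> \<rho> where "\<tau> = \<sigma> @ \<rho>" "path lab n \<rho> m" using Cons.IH by blast
      then show ?thesis by (intro exI[of _ "d # \<sigma>"] exI[of _ \<rho>]) simp
    qed
  next
    assume "\<exists>\<sigma> \<rho>. d # \<tau> = \<sigma> @ \<rho> \<and> path lab n \<rho> m"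
    then obtain \<sigma> \<rho> where "d # \<tau> = \<sigma> @ \<rho>" "path lab n \<rho> m" by blast
    then show "crosses lab n (d # \<tau>) m" using Cons by (cases \<sigma>) auto
  qed
qed

lemma pos_unique:
  assumes G: "lambda_graph N lab" and r: "r \<in> N"
    and p1: "path lab r \<rho> l" and p2: "path lab r (s @ \<rho>) l"
  shows "s = []"
proof -
  obtain x where "path lab r \<rho> x" "path lab x s l" using path_decomp[OF p2] by blast
  moreover have "x = l" using calculation p1 path_det by fastforce
  moreover have "l \<in> N" using path_in[OF _ r p1] G by (auto simp: lambda_graph_def)
  ultimately show ?thesis using G by (auto simp: lambda_graph_def)
qed

fun cnt :: "('n \<Rightarrow> ('n,'a) kind) \<Rightarrow> 'n \<Rightarrow> trace \<Rightarrow> trace \<Rightarrow> nat" where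
  "cnt lab r \<rho> [] = 0"
| "cnt lab r \<rho> (d # \<sigma>) = (if (\<exists>x. path lab r (d # (\<sigma> @ \<rho>)) x \<and> is_abs (lab x))
      then Suc (cnt lab r \<rho> \<sigma>) else cnt lab r \<rho> \<sigma>)"

lemma cnt_append: "cnt lab r \<rho> (\<sigma> @ \<sigma>0) = cnt lab r (\<sigma>0 @ \<rho>) \<sigma> + cnt lab r \<rho> \<sigma>0"
  by (induction \<sigma>) auto

definition kinds_agree where
  "kinds_agree lab r r' \<longleftrightarrow> (\<forall>\<tau>. (\<exists>x. path lab r \<tau> x \<and> is_abs (lab x)) = (\<exists>y. path lab r' \<tau> y \<and> is_abs (lab y)))"

lemma cnt_agree: "kinds_agree lab r r' \<Longrightarrow> cnt lab r \<rho> \<sigma> = cnt lab r' \<rho> \<sigma>"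
  by (induction \<sigma>) (auto simp: kinds_agree_def)

lemma idx_cnt:
  assumes G: "lambda_graph N lab" and r: "r \<in> N" and p: "path lab r \<rho> l"
  shows "idx lab l r (\<sigma> @ \<rho>) = cnt lab r \<rho> \<sigma>"
proof (induction \<sigma>)
  case Nil then show ?case using p by (cases \<rho>) auto
next
  case (Cons d \<sigma>)
  have "\<not> path lab r (d # \<sigma> @ \<rho>) l" using pos_unique[OF G r p, of "d # \<sigma>"] by auto
  then show ?case using Cons by auto
qed


lemma rb_BV_inv: "rb lab r \<tau> (BV i) \<Longrightarrow> \<exists>n l. path lab r \<tau> n \<and> lab n = BVar l \<and> i = idx lab l r \<tau>"
  by (erule rb.cases) auto
lemma rb_FV_inv: "rb lab r \<tau> (FV a) \<Longrightarrow> \<exists>n. path lab r \<tau> n \<and> lab n = FVar a"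
  by (erule rb.cases) auto
lemma rb_Lam_inv: "rb lab r \<tau> (Lam t) \<Longrightarrow> \<exists>n k. path lab r \<tau> n \<and> lab n = Abs k \<and> rb lab r (DD#\<tau>) t"
  by (erule rb.cases) auto
lemma rb_Ap_inv: "rb lab r \<tau> (Ap t1 t2) \<Longrightarrow> \<exists>n n1 n2. path lab r \<tau> n \<and> lab n = App n1 n2
   \<and> rb lab r (DL#\<tau>) t1 \<and> rb lab r (DR#\<tau>) t2"
  by (erule rb.cases) auto

lemma rb_inv_BVar: "rb lab r \<tau> t \<Longrightarrow> path lab r \<tau> n \<Longrightarrow> lab n = BVar l \<Longrightarrow> t = BV (idx lab l r \<tau>)"
  by (erule rb.cases) (auto dest: path_det)
lemma rb_inv_FVar: "rb lab r \<tau> t \<Longrightarrow> path lab r \<tau> n \<Longrightarrow> lab n = FVar a \<Longrightarrow> t = FV a"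
  by (erule rb.cases) (auto dest: path_det)
lemma rb_inv_Abs: "rb lab r \<tau> t \<Longrightarrow> path lab r \<tau> n \<Longrightarrow> lab n = Abs m \<Longrightarrow> \<exists>t'. t = Lam t' \<and> rb lab r (DD#\<tau>) t'"
  by (erule rb.cases) (auto dest: path_det)
lemma rb_inv_App: "rb lab r \<tau> t \<Longrightarrow> path lab r \<tau> n \<Longrightarrow> lab n = App n1 n2 \<Longrightarrow>
   \<exists>t1 t2. t = Ap t1 t2 \<and> rb lab r (DL#\<tau>) t1 \<and> rb lab r (DR#\<tau>) t2"
  by (erule rb.cases) (auto dest: path_det)

lemma rb_unique: "rb lab r \<tau> t \<Longrightarrow> rb lab r \<tau> t' \<Longrightarrow> t = t'"
proof (induction arbitrary: t' rule: rb.induct)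
  case (rb_bvar r \<tau> n l) then show ?case using rb_inv_BVar by metis
next
  case (rb_fvar r \<tau> n a) then show ?case using rb_inv_FVar by metis
next
  case (rb_abs r \<tau> n m t) then show ?case using rb_inv_Abs by metis
next
  case (rb_app r \<tau> n n1 n2 t1 t2) then show ?case using rb_inv_App by metis
qed

lemma rb_exists:
  assumes G: "lambda_graph N lab" and r: "r \<in> N"
  shows "path lab r \<tau> n \<Longrightarrow> \<exists>t. rb lab r \<tau> t"
proof (induction "card N - length \<tau>" arbitrary: \<tau> n rule: less_induct)
  case less
  have lt: "card N - length (d # \<tau>) < card N - length \<tau>" if "path lab r (d # \<tau>) k" for d k
    using path_bound[OF G r that] by simp
  show ?case
  proof (cases "lab n")
    case (App n1 n2)
    have p1: "path lab r (DL # \<tau>) n1" and p2: "path lab r (DR # \<tau>) n2"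
      using less(2) App by (auto simp: path_DL path_DR)
    obtain t1 where "rb lab r (DL # \<tau>) t1" using less(1)[OF lt[OF p1] p1] by blast
    moreover obtain t2 where "rb lab r (DR # \<tau>) t2" using less(1)[OF lt[OF p2] p2] by blast
    ultimately show ?thesis using rb_app[OF less(2) App] by blast
  next
    case (Abs m)
    have p1: "path lab r (DD # \<tau>) m" using less(2) Abs by (auto simp: path_DD)
    obtain t1 where "rb lab r (DD # \<tau>) t1" using less(1)[OF lt[OF p1] p1] by blast
    then show ?thesis using rb_abs[OF less(2) Abs] by blast
  next
    case (FVar a) then show ?thesis using rb_fvar[OF less(2)] by blast
  next
    case (BVar l) then show ?thesis using rb_bvar[OF less(2)] by blast
  qed
qed

lemma readback_eq:
  assumes G: "lambda_graph N lab" and r: "r \<in> N"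
  shows "rb lab r [] (readback lab r)"
proof -
  obtain t where t: "rb lab r [] t" using rb_exists[OF G r, of "[]" r] by auto
  have u: "x = t" if "rb lab r [] x" for x using rb_unique[OF that t] .
  have "readback lab r = t" unfolding readback_def
    by (rule the_equality[where P="rb lab r []", OF t u])
  then show ?thesis using t by simp
qed

lemma dom_split:
  assumes G: "lambda_graph N lab" and r: "is_root N lab r" and p: "path lab r \<tau> n"
    and l: "lab n = BVar l"
  shows "\<exists>\<sigma> \<rho>. \<tau> = \<sigma> @ \<rho> \<and> path lab r \<rho> l"
proof -
  have "n \<in> N" using path_in[of N lab r] p r G by (auto simp: lambda_graph_def is_root_def)
  then have "dominates N lab l n" using G l by (auto simp: lambda_graph_def)
  then show ?thesis using r p by (auto simp: dominates_def crosses_iff)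
qed

lemma common_R:
  assumes H: "homogeneous lab R" and P: "propagated lab R" and rr: "(r, r') \<in> R"
    and p: "path lab r \<rho> x" and q: "path lab r' \<rho> y"
  shows "(x, y) \<in> R"
  using shape[OF H P p rr] q path_det by metis

theorem fwd:
  assumes G: "lambda_graph N lab" and B: "bisimulation lab R" and O: "open_rel lab R"
  shows "rb lab r \<tau> t \<Longrightarrow> (r, r') \<in> R \<Longrightarrow> is_root N lab r \<Longrightarrow> is_root N lab r' \<Longrightarrow> rb lab r' \<tau> t"
proof (induction rule: rb.induct)
  case (rb_bvar r \<tau> n l)
  have H: "homogeneous lab R" and P: "propagated lab R" using B by (auto simp: bisimulation_def)
  obtain m where m: "path lab r' \<tau> m" "(n, m) \<in> R" using shape[OF H P rb_bvar(1) rb_bvar(3)] by auto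
  have "homog_kind (lab n) (lab m)" using H m by (auto simp: homogeneous_def)
  then obtain l' where l': "lab m = BVar l'" using rb_bvar(2) by (cases "lab m") auto
  have ll: "(l, l') \<in> R" using B m rb_bvar(2) l' by (auto simp: bisimulation_def)
  have rN: "r \<in> N" and r'N: "r' \<in> N" using rb_bvar by (auto simp: is_root_def)
  have pre: "pre_lambda_graph N lab" using G by (auto simp: lambda_graph_def)
  obtain \<sigma>1 \<rho>1 where s1: "\<tau> = \<sigma>1 @ \<rho>1" "path lab r \<rho>1 l" using dom_split[OF G rb_bvar(4) rb_bvar(1) rb_bvar(2)] by blast
  obtain \<sigma>2 \<rho>2 where s2: "\<tau> = \<sigma>2 @ \<rho>2" "path lab r' \<rho>2 l'" using dom_split[OF G rb_bvar(5) m(1) l'] by blast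
  have lN: "l \<in> N" using path_in[OF pre rN s1(2)] .
  have l'N: "l' \<in> N" using path_in[OF pre r'N s2(2)] .
  have ka: "kinds_agree lab r r'"
    unfolding kinds_agree_def
  proof
    fix \<tau>'
    show "(\<exists>x. path lab r \<tau>' x \<and> is_abs (lab x)) = (\<exists>y. path lab r' \<tau>' y \<and> is_abs (lab y))"
    proof
      assume "\<exists>x. path lab r \<tau>' x \<and> is_abs (lab x)"
      then obtain x where x: "path lab r \<tau>' x" "is_abs (lab x)" by blast
      obtain y where y: "path lab r' \<tau>' y" "(x, y) \<in> R" using shape[OF H P x(1) rb_bvar(3)] by blast
      have "homog_kind (lab x) (lab y)" using H y by (auto simp: homogeneous_def)
      then show "\<exists>y. path lab r' \<tau>' y \<and> is_abs (lab y)" using x y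
        by (cases "lab x"; cases "lab y") (auto simp: is_abs_def)
    next
      assume "\<exists>y. path lab r' \<tau>' y \<and> is_abs (lab y)"
      then obtain y where y: "path lab r' \<tau>' y" "is_abs (lab y)" by blast
      obtain x where x: "path lab r \<tau>' x" "(x, y) \<in> R" using shape_back[OF H P y(1) rb_bvar(3)] by blast
      have "homog_kind (lab x) (lab y)" using H x by (auto simp: homogeneous_def)
      then show "\<exists>x. path lab r \<tau>' x \<and> is_abs (lab x)" using x y
        by (cases "lab x"; cases "lab y") (auto simp: is_abs_def)
    qed
  qed
  have eq: "\<rho>1 = \<rho>2"
  proof -
    from s1(1) s2(1) obtain us where
      c: "(\<sigma>1 = \<sigma>2 @ us \<and> us @ \<rho>1 = \<rho>2) \<or> (\<sigma>1 @ us = \<sigma>2 \<and> \<rho>1 = us @ \<rho>2)"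
      by (metis append_eq_append_conv2)
    then show ?thesis
    proof
      assume a: "\<sigma>1 = \<sigma>2 @ us \<and> us @ \<rho>1 = \<rho>2"
      show ?thesis
      proof (cases "us = []")
        case True then show ?thesis using a by simp
      next
        case False
        obtain b where b: "path lab r' \<rho>1 b" "path lab b us l'" using path_decomp[of lab r' us \<rho>1 l'] s2 a by auto
        have "(l, b) \<in> R" using common_R[OF H P rb_bvar(3) s1(2) b(1)] .
        then show ?thesis using core[OF G H P _ ll b(2) False l'N] by blast
      qed
    next
      assume a: "\<sigma>1 @ us = \<sigma>2 \<and> \<rho>1 = us @ \<rho>2"
      show ?thesis
      proof (cases "us = []")
        case True then show ?thesis using a by simp
      next
        case False
        obtain b where b: "path lab r \<rho>2 b" "path lab b us l" using path_decomp[of lab r us \<rho>2 l] s1 a by auto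
        have "(b, l') \<in> R" using common_R[OF H P rb_bvar(3) b(1) s2(2)] .
        then show ?thesis using core[OF G homog_conv[OF H] prop_conv[OF P], of l' b l us] ll b(2) False lN
          by blast
      qed
    qed
  qed
  then have eq2: "\<sigma>1 = \<sigma>2" using s1 s2 by simp
  have "idx lab l r \<tau> = idx lab l' r' \<tau>"
    using idx_cnt[OF G rN s1(2), of \<sigma>1] idx_cnt[OF G r'N s2(2), of \<sigma>2] s1 s2 eq eq2 cnt_agree[OF ka]
    by simp
  then show ?case using rb.rb_bvar[OF m(1) l'] by simp
next
  case (rb_fvar r \<tau> n a)
  have H: "homogeneous lab R" and P: "propagated lab R" using B by (auto simp: bisimulation_def)
  obtain m where m: "path lab r' \<tau> m" "(n, m) \<in> R" using shape[OF H P rb_fvar(1) rb_fvar(3)] by auto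
  have "homog_kind (lab n) (lab m)" using H m by (auto simp: homogeneous_def)
  then obtain b where b: "lab m = FVar b" using rb_fvar(2) by (cases "lab m") auto
  then have "n = m" using O m rb_fvar(2) by (auto simp: open_rel_def)
  then show ?case using rb.rb_fvar[OF m(1) b] b rb_fvar(2) by simp
next
  case (rb_abs r \<tau> n n' t)
  have H: "homogeneous lab R" and P: "propagated lab R" using B by (auto simp: bisimulation_def)
  obtain m where m: "path lab r' \<tau> m" "(n, m) \<in> R" using shape[OF H P rb_abs(1) rb_abs(5)] by auto
  have "homog_kind (lab n) (lab m)" using H m by (auto simp: homogeneous_def)
  then obtain m' where b: "lab m = Abs m'" using rb_abs(2) by (cases "lab m") auto
  show ?case using rb.rb_abs[OF m(1) b] rb_abs by simp
next
  case (rb_app r \<tau> n n1 n2 t1 t2)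
  have H: "homogeneous lab R" and P: "propagated lab R" using B by (auto simp: bisimulation_def)
  obtain m where m: "path lab r' \<tau> m" "(n, m) \<in> R" using shape[OF H P rb_app(1) rb_app(7)] by auto
  have "homog_kind (lab n) (lab m)" using H m by (auto simp: homogeneous_def)
  then obtain m1 m2 where b: "lab m = App m1 m2" using rb_app(2) by (cases "lab m") auto
  show ?case using rb.rb_app[OF m(1) b] rb_app by simp
qed


lemma common:
  "path lab r \<tau> x \<Longrightarrow> rb lab r [] t \<Longrightarrow> rb lab r' [] t \<Longrightarrow> \<exists>y u. path lab r' \<tau> y \<and> rb lab r \<tau> u \<and> rb lab r' \<tau> u"
proof (induction rule: path.induct)
  case (path_eps n) then show ?case by auto
next
  case (path_abs n \<tau> m m')
  obtain y u where yu: "path lab r' \<tau> y" "rb lab n \<tau> u" "rb lab r' \<tau> u" using path_abs.IH[OF path_abs.prems] by blast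
  obtain u' where u': "u = Lam u'" "rb lab n (DD#\<tau>) u'" using rb_inv_Abs[OF yu(2) path_abs.hyps(1,2)] by blast
  obtain n0 k where "path lab r' \<tau> n0" "lab n0 = Abs k" "rb lab r' (DD#\<tau>) u'" using rb_Lam_inv yu(3) u' by metis
  then show ?case using u' by (auto simp: path_DD)
next
  case (path_appL n \<tau> m m1 m2)
  obtain y u where yu: "path lab r' \<tau> y" "rb lab n \<tau> u" "rb lab r' \<tau> u" using path_appL.IH[OF path_appL.prems] by blast
  obtain u1 u2 where u': "u = Ap u1 u2" "rb lab n (DL#\<tau>) u1" using rb_inv_App[OF yu(2) path_appL.hyps(1,2)] by blast
  obtain n0 k1 k2 where "path lab r' \<tau> n0" "lab n0 = App k1 k2" "rb lab r' (DL#\<tau>) u1" using rb_Ap_inv yu(3) u' by metis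
  then show ?case using u' by (auto simp: path_DL)
next
  case (path_appR n \<tau> m m1 m2)
  obtain y u where yu: "path lab r' \<tau> y" "rb lab n \<tau> u" "rb lab r' \<tau> u" using path_appR.IH[OF path_appR.prems] by blast
  obtain u1 u2 where u': "u = Ap u1 u2" "rb lab n (DR#\<tau>) u2" using rb_inv_App[OF yu(2) path_appR.hyps(1,2)] by blast
  obtain n0 k1 k2 where "path lab r' \<tau> n0" "lab n0 = App k1 k2" "rb lab r' (DR#\<tau>) u2" using rb_Ap_inv yu(3) u' by metis
  then show ?case using u' by (auto simp: path_DR)
qed

lemma kinds_from_rb:
  assumes t: "rb lab r [] t" and t': "rb lab r' [] t"
  shows "kinds_agree lab r r'"
proof -
  have one: "\<exists>y. path lab b \<tau> y \<and> is_abs (lab y)"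
    if h1: "rb lab a [] t" and h2: "rb lab b [] t" and h3: "path lab a \<tau> x" and h4: "is_abs (lab x)" for a b \<tau> x
  proof -
    obtain y u where yu: "path lab b \<tau> y" "rb lab a \<tau> u" "rb lab b \<tau> u" using common[OF h3 h1 h2] by blast
    obtain k where k: "lab x = Abs k" using h4 by (auto simp: is_abs_def)
    obtain u' where "u = Lam u'" using rb_inv_Abs[OF yu(2) h3 k] by blast
    then obtain n k' where "path lab b \<tau> n" "lab n = Abs k'" using rb_Lam_inv yu(3) by metis
    then show ?thesis by (auto simp: is_abs_def)
  qed
  show ?thesis unfolding kinds_agree_def using one t t' by metis
qed

lemma inR: "(r, r') \<in> Q \<Longrightarrow> path lab r \<tau> x \<Longrightarrow> path lab r' \<tau> y \<Longrightarrow> (x, y) \<in> propagation lab Q"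
proof (induction \<tau> arbitrary: x y)
  case Nil then show ?case by (simp add: propagation.prop_base)
next
  case (Cons d \<tau>)
  show ?case
  proof (cases d)
    case DD
    obtain kx ky where k: "path lab r \<tau> kx" "lab kx = Abs x" "path lab r' \<tau> ky" "lab ky = Abs y"
      using Cons.prems DD by (auto simp: path_DD)
    have "(kx, ky) \<in> propagation lab Q" using Cons.IH[OF Cons.prems(1) k(1) k(3)] .
    then show ?thesis by (rule propagation.prop_D[OF _ k(2) k(4)])
  next
    case DL
    obtain kx ky x2 y2 where k: "path lab r \<tau> kx" "lab kx = App x x2" "path lab r' \<tau> ky" "lab ky = App y y2"
      using Cons.prems DL by (auto simp: path_DL)
    have "(kx, ky) \<in> propagation lab Q" using Cons.IH[OF Cons.prems(1) k(1) k(3)] .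
    then show ?thesis by (rule propagation.prop_L[OF _ k(2) k(4)])
  next
    case DR
    obtain kx ky x2 y2 where k: "path lab r \<tau> kx" "lab kx = App x2 x" "path lab r' \<tau> ky" "lab ky = App y2 y"
      using Cons.prems DR by (auto simp: path_DR)
    have "(kx, ky) \<in> propagation lab Q" using Cons.IH[OF Cons.prems(1) k(1) k(3)] .
    then show ?thesis by (rule propagation.prop_R[OF _ k(2) k(4)])
  qed
qed

lemma R_char: "(n, m) \<in> propagation lab Q \<Longrightarrow> \<exists>r r' \<tau>. (r, r') \<in> Q \<and> path lab r \<tau> n \<and> path lab r' \<tau> m"
proof (induction rule: propagation.induct)
  case (prop_base n m) then show ?case by (intro exI[of _ n] exI[of _ m] exI[of _ "[]"]) simp
next
  case (prop_L n m n1 n2 m1 m2)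
  then obtain r r' \<tau> where a: "(r, r') \<in> Q" "path lab r \<tau> n" "path lab r' \<tau> m" by blast
  have "path lab r (DL#\<tau>) n1" "path lab r' (DL#\<tau>) m1" using a prop_L.hyps by (auto simp: path_DL)
  then show ?case using a(1) by blast
next
  case (prop_R n m n1 n2 m1 m2)
  then obtain r r' \<tau> where a: "(r, r') \<in> Q" "path lab r \<tau> n" "path lab r' \<tau> m" by blast
  have "path lab r (DR#\<tau>) n2" "path lab r' (DR#\<tau>) m2" using a prop_R.hyps by (auto simp: path_DR)
  then show ?case using a(1) by blast
next
  case (prop_D n m n' m')
  then obtain r r' \<tau> where a: "(r, r') \<in> Q" "path lab r \<tau> n" "path lab r' \<tau> m" by blast
  have "path lab r (DD#\<tau>) n'" "path lab r' (DD#\<tau>) m'" using a prop_D.hyps by (auto simp: path_DD)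
  then show ?case using a(1) by blast
qed

lemma mismatch:
  assumes G: "lambda_graph N lab" and r: "r \<in> N" and r': "r' \<in> N" and ka: "kinds_agree lab r r'"
    and p: "path lab r \<rho> l" and p': "path lab r' (s @ \<rho>) l'" and s: "s \<noteq> []" and ab: "is_abs (lab l')"
  shows "idx lab l r (\<sigma> @ s @ \<rho>) \<noteq> idx lab l' r' (\<sigma> @ s @ \<rho>)"
proof -
  have "idx lab l r (\<sigma> @ s @ \<rho>) = cnt lab r (s @ \<rho>) \<sigma> + cnt lab r \<rho> s"
    using idx_cnt[OF G r p, of "\<sigma> @ s"] cnt_append by simp
  moreover have "idx lab l' r' (\<sigma> @ s @ \<rho>) = cnt lab r (s @ \<rho>) \<sigma>"
    using idx_cnt[OF G r' p', of \<sigma>] cnt_agree[OF ka] by simp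
  moreover have "cnt lab r \<rho> s \<ge> 1"
  proof -
    obtain d s1 where ds: "s = d # s1" using s by (cases s) auto
    have "\<exists>x. path lab r (d # (s1 @ \<rho>)) x \<and> is_abs (lab x)"
      using ka p' ab ds unfolding kinds_agree_def by auto
    then show ?thesis using ds by simp
  qed
  ultimately show ?thesis by simp
qed

lemma bwd:
  assumes G: "lambda_graph N lab" and Qq: "is_query N lab Q"
    and E: "\<forall>n m. (n, m) \<in> Q \<longrightarrow> readback lab n = readback lab m"
  shows "open_rel lab (propagation lab Q) \<and> bisimulation lab (propagation lab Q)"
proof -
  let ?R = "propagation lab Q"
  have pre: "pre_lambda_graph N lab" using G by (auto simp: lambda_graph_def)
  have key: "\<exists>r r' \<tau> u. (r, r') \<in> Q \<and> is_root N lab r \<and> is_root N lab r' \<and> path lab r \<tau> n \<and> path lab r' \<tau> m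
     \<and> rb lab r \<tau> u \<and> rb lab r' \<tau> u \<and> kinds_agree lab r r'" if nm: "(n, m) \<in> ?R" for n m
  proof -
    obtain r r' \<tau> where a: "(r, r') \<in> Q" "path lab r \<tau> n" "path lab r' \<tau> m" using R_char[OF nm] by blast
    have roots: "is_root N lab r" "is_root N lab r'" using Qq a(1) by (auto simp: is_query_def)
    then have rN: "r \<in> N" "r' \<in> N" by (auto simp: is_root_def)
    have t: "rb lab r [] (readback lab r)" "rb lab r' [] (readback lab r)"
      using readback_eq[OF G rN(1)] readback_eq[OF G rN(2)] E a(1) by auto
    obtain y u where "path lab r' \<tau> y" "rb lab r \<tau> u" "rb lab r' \<tau> u" using common[OF a(2) t] by blast
    moreover have "y = m" using calculation(1) a(3) path_det by metis
    ultimately show ?thesis using a roots kinds_from_rb[OF t] by blast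
  qed
  have inN: "n \<in> N" if "is_root N lab r" "path lab r \<tau> n" for r \<tau> n
    using path_in[OF pre _ that(2)] that(1) by (auto simp: is_root_def)
  have op: "open_rel lab ?R"
    unfolding open_rel_def
  proof (intro allI impI)
    fix n m a b assume h: "(n, m) \<in> ?R \<and> lab n = FVar a \<and> lab m = FVar b"
    then obtain r r' \<tau> u where k: "(r, r') \<in> Q" "is_root N lab r" "is_root N lab r'" "path lab r \<tau> n"
      "path lab r' \<tau> m" "rb lab r \<tau> u" "rb lab r' \<tau> u" using key by blast
    have "u = FV a" "u = FV b" using rb_inv_FVar k h by metis+
    then have "a = b" by simp
    moreover have "n \<in> N" "m \<in> N" using inN k by blast+
    ultimately show "n = m" using pre h unfolding pre_lambda_graph_def by blast
  qed
  have hom: "homogeneous lab ?R"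
    unfolding homogeneous_def
  proof (clarify)
    fix n m assume "(n, m) \<in> ?R"
    then obtain r r' \<tau> u where k: "path lab r \<tau> n"
      "path lab r' \<tau> m" "rb lab r \<tau> u" "rb lab r' \<tau> u" using key by blast
    show "homog_kind (lab n) (lab m)"
    proof (cases u)
      case (BV i)
      then show ?thesis using rb_BV_inv k path_det by (metis homog_kind.simps(4))
    next
      case (FV a)
      then show ?thesis using rb_FV_inv k path_det by (metis homog_kind.simps(3))
    next
      case (Ap t1 t2)
      then show ?thesis using rb_Ap_inv k path_det by (metis homog_kind.simps(1))
    next
      case (Lam t1)
      then show ?thesis using rb_Lam_inv k path_det by (metis homog_kind.simps(2))
    qed
  qed
  have prp: "propagated lab ?R"
    unfolding propagated_def
  proof (intro conjI allI impI)
    fix n m n1 n2 m1 m2 assume h: "(n, m) \<in> ?R \<and> lab n = App n1 n2 \<and> lab m = App m1 m2"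
    then have h1: "(n, m) \<in> ?R" and h2: "lab n = App n1 n2" and h3: "lab m = App m1 m2" by auto
    show "(n1, m1) \<in> ?R" by (rule propagation.prop_L[OF h1 h2 h3])
    show "(n2, m2) \<in> ?R" by (rule propagation.prop_R[OF h1 h2 h3])
  next
    fix n m n' m' assume h: "(n, m) \<in> ?R \<and> lab n = Abs n' \<and> lab m = Abs m'"
    then have h1: "(n, m) \<in> ?R" and h2: "lab n = Abs n'" and h3: "lab m = Abs m'" by auto
    show "(n', m') \<in> ?R" by (rule propagation.prop_D[OF h1 h2 h3])
  qed
  have var: "(l, l') \<in> ?R" if h: "(n, m) \<in> ?R" "lab n = BVar l" "lab m = BVar l'" for n m l l'
  proof -
    obtain r r' \<tau> u where k: "(r, r') \<in> Q" "is_root N lab r" "is_root N lab r'" "path lab r \<tau> n"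
      "path lab r' \<tau> m" "rb lab r \<tau> u" "rb lab r' \<tau> u" "kinds_agree lab r r'" using key[OF h(1)] by blast
    have rN: "r \<in> N" "r' \<in> N" using k by (auto simp: is_root_def)
    have ieq: "idx lab l r \<tau> = idx lab l' r' \<tau>" using rb_inv_BVar k h by (metis lnterm.inject(1))
    obtain \<sigma>1 \<rho>1 where s1: "\<tau> = \<sigma>1 @ \<rho>1" "path lab r \<rho>1 l" using dom_split[OF G k(2) k(4) h(2)] by blast
    obtain \<sigma>2 \<rho>2 where s2: "\<tau> = \<sigma>2 @ \<rho>2" "path lab r' \<rho>2 l'" using dom_split[OF G k(3) k(5) h(3)] by blast
    have abs: "is_abs (lab l)" "is_abs (lab l')"
      using pre h inN k unfolding pre_lambda_graph_def by blast+
    have ka': "kinds_agree lab r' r" using k(8) by (auto simp: kinds_agree_def)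
    have eq: "\<rho>1 = \<rho>2"
    proof -
      from s1(1) s2(1) obtain us where
        c: "(\<sigma>1 = \<sigma>2 @ us \<and> us @ \<rho>1 = \<rho>2) \<or> (\<sigma>1 @ us = \<sigma>2 \<and> \<rho>1 = us @ \<rho>2)"
        by (metis append_eq_append_conv2)
      then show ?thesis
      proof
        assume a: "\<sigma>1 = \<sigma>2 @ us \<and> us @ \<rho>1 = \<rho>2"
        show ?thesis
        proof (cases "us = []")
          case True then show ?thesis using a by simp
        next
          case False
          have "\<tau> = \<sigma>2 @ us @ \<rho>1" using s1 a by simp
          then show ?thesis using mismatch[OF G rN(1) rN(2) k(8) s1(2) _ False abs(2), of \<sigma>2] s2(2) a ieq by simp
        qed
      next
        assume a: "\<sigma>1 @ us = \<sigma>2 \<and> \<rho>1 = us @ \<rho>2"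
        show ?thesis
        proof (cases "us = []")
          case True then show ?thesis using a by simp
        next
          case False
          have "\<tau> = \<sigma>1 @ us @ \<rho>2" using s1 a by simp
          then show ?thesis using mismatch[OF G rN(2) rN(1) ka' s2(2) _ False abs(1), of \<sigma>1] s1(2) a ieq by simp
        qed
      qed
    qed
    then show ?thesis using inR[OF k(1) s1(2)] s2(2) by simp
  qed
  show ?thesis using op hom prp var unfolding bisimulation_def by blast
qed

theorem mainTheorem19:
  fixes N :: "'n set" and lab :: "'n \<Rightarrow> ('n, 'a) kind" and Q :: "('n \<times> 'n) set"
  assumes "lambda_graph N lab"
    and "is_query N lab Q"
  shows "(open_rel lab (propagation lab Q) \<and> bisimulation lab (propagation lab Q))
     \<longleftrightarrow> (\<forall>n m. (n, m) \<in> Q \<longrightarrow> readback lab n = readback lab m)"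
proof
  assume "\<forall>n m. (n, m) \<in> Q \<longrightarrow> readback lab n = readback lab m"
  then show "open_rel lab (propagation lab Q) \<and> bisimulation lab (propagation lab Q)"
    using bwd assms by blast
next
  assume h: "open_rel lab (propagation lab Q) \<and> bisimulation lab (propagation lab Q)"
  show "\<forall>n m. (n, m) \<in> Q \<longrightarrow> readback lab n = readback lab m"
  proof (intro allI impI)
    fix n m assume nm: "(n, m) \<in> Q"
    have roots: "is_root N lab n" "is_root N lab m" using assms(2) nm by (auto simp: is_query_def)
    have in1: "(n, m) \<in> propagation lab Q" using nm by (rule propagation.prop_base)
    have "rb lab n [] t \<longleftrightarrow> rb lab m [] t" for t
    proof
      assume "rb lab n [] t" then show "rb lab m [] t"
        using fwd[OF assms(1)] h in1 roots by blast
    next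
      assume "rb lab m [] t" then show "rb lab n [] t"
        using fwd[OF assms(1) bisim_conv open_conv, of "propagation lab Q"] h in1 roots by blast
    qed
    then have "rb lab n [] = rb lab m []" by (intro ext)
    then show "readback lab n = readback lab m" unfolding readback_def by simp
  qed
qed

end
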